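(* Let $g\ge2$ be an integer and let $k,d_1,d_2,d_3,\ell,m,n$ be positive integers with $1\le d_1,d_2,d_3\le g-1$, $\ell\le m\le n$ and $n\ge 2$, satisfying $$F_k=d_1\frac{g^\ell-1}{g-1}\cdot d_2\frac{g^m-1}{g-1}\cdot d_3\frac{g^n-1}{g-1}.$$ Then $$k<3n\frac{\log g}{\log\alpha}+2<10n\log g,$$ where $\alpha=(1+\sqrt5)/2$.
   Context: $(F_n)_{n\ge 0}$ is the Fibonacci sequence: $F_0=0$, $F_1=1$, $F_{n+2}=F_{n+1}+F_n$. $\log$ is the natural logarithm. *)

theory Defs
  imports Complex_Main "HOL-Number_Theory.Fib"
begin

end

theory Submission
  imports Defs
begin

lemma phi_facts: "(1 + sqrt 5) / 2 \<ge> (1.6::real)" "((1 + sqrt 5) / 2)^2 = (1 + sqrt 5) / 2 + (1::real)"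
proof -
  have "sqrt 5 \<ge> (2.2::real)" by (rule real_le_rsqrt) (simp add: power2_eq_square)
  then show "(1 + sqrt 5) / 2 \<ge> (1.6::real)" by simp
  show "((1 + sqrt 5) / 2)^2 = (1 + sqrt 5) / 2 + (1::real)"
    by (simp add: power2_eq_square field_simps)
qed

lemma fib_lower: "((1 + sqrt 5) / 2) ^ j \<le> real (fib (j + 2))"
proof (induction j rule: nat_less_induct)
  case (1 j)
  define a :: real where "a = (1 + sqrt 5) / 2"
  have a2: "a^2 = a + 1" and a16: "a \<ge> 1.6" unfolding a_def using phi_facts by auto
  show ?case
  proof (cases "j < 2")
    case True
    then have "j = 0 \<or> j = 1" by auto
    then show ?thesis
    proof
      assume "j = 1"
      have "fib 3 = 2" by (simp add: numeral_3_eq_3)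
      moreover have "(1 + sqrt 5) / 2 \<le> (2::real)"
      proof -
        have "sqrt 5 \<le> (3::real)" by (rule real_sqrt_le_iff[THEN iffD2, of 5 9, simplified])
        then show ?thesis by simp
      qed
      ultimately show ?thesis using \<open>j = 1\<close> by simp
    qed simp
  next
    case False
    then obtain i where j: "j = i + 2" by (metis add.commute le_Suc_ex not_less)
    have IH1: "a ^ i \<le> real (fib (i + 2))" using 1[rule_format, of i] j unfolding a_def by auto
    have IH2: "a ^ (i+1) \<le> real (fib (i + 3))" using 1[rule_format, of "i+1"] j unfolding a_def
      by (simp add: numeral_3_eq_3)
    have "fib (j + 2) = fib (i + 3) + fib (i + 2)"
      using fib_plus_2[of "i+2"] j by (simp add: numeral_3_eq_3 add.commute)
    moreover have "a ^ j = a^(i+1) + a^i"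
    proof -
      have "a ^ j = a^i * a^2" by (simp add: j power_add power2_eq_square)
      then show ?thesis using a2 by (simp add: algebra_simps)
    qed
    ultimately show ?thesis using IH1 IH2 a_def by simp
  qed
qed

lemma factor_bound:
  fixes g d j :: nat
  assumes "g \<ge> 2" "d \<le> g - 1" "j \<le> n"
  shows "0 \<le> real d * (real g ^ j - 1) / (real g - 1)"
    and "real d * (real g ^ j - 1) / (real g - 1) < real g ^ n"
proof -
  have g1: "real g - 1 > 0" using assms by simp
  have gj: "real g ^ j \<ge> 1" using assms by simp
  show "0 \<le> real d * (real g ^ j - 1) / (real g - 1)" using g1 gj by simp
  have "real d \<le> real g - 1" using assms by linarith
  then have "real d * (real g ^ j - 1) \<le> (real g - 1) * (real g ^ j - 1)"
    using gj by (intro mult_right_mono) auto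
  then have "real d * (real g ^ j - 1) / (real g - 1) \<le> real g ^ j - 1"
    using g1 by (simp add: divide_le_eq mult.commute)
  also have "\<dots> < real g ^ n"
  proof -
    have "real g ^ j \<le> real g ^ n" by (rule power_increasing) (use assms in auto)
    then show ?thesis by linarith
  qed
  finally show "real d * (real g ^ j - 1) / (real g - 1) < real g ^ n" .
qed

lemma ln_phi: "ln ((1 + sqrt 5) / 2) > (0.4::real)" "ln 2 > (0.4::real)"
proof -
  have e0: "1 + (-0.2) \<le> exp (-0.2::real)" by (rule exp_ge_add_one_self)
  have e: "exp (0.2::real) \<le> 1 / (1 - 0.2)"
  proof -
    have "exp (0.2::real) = 1 / exp (-0.2)" by (simp add: exp_minus field_simps)
    also have "\<dots> \<le> 1 / (1 - 0.2)" using e0 by (intro divide_left_mono) auto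
    finally show ?thesis .
  qed
  have "exp (0.4::real) = exp 0.2 * exp 0.2" by (simp flip: exp_add)
  also have "\<dots> \<le> (1 / (1 - 0.2)) * (1 / (1 - 0.2))"
    using e by (intro mult_mono) auto
  also have "\<dots> < 1.6" by simp
  finally have x: "exp (0.4::real) < 1.6" .
  have "ln (exp (0.4::real)) < ln 1.6" using x by (subst ln_less_cancel_iff) auto
  then have "(0.4::real) < ln 1.6" by simp
  then show "ln ((1 + sqrt 5) / 2) > (0.4::real)" "ln 2 > (0.4::real)"
  proof -
    assume h: "(0.4::real) < ln 1.6"
    have "ln 1.6 \<le> ln ((1 + sqrt 5) / 2)" using phi_facts(1) by (subst ln_le_cancel_iff) auto
    moreover have h2: "ln 1.6 \<le> ln (2::real)" by (subst ln_le_cancel_iff) auto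
    ultimately show "ln ((1 + sqrt 5) / 2) > (0.4::real)" using h by linarith
    show "ln 2 > (0.4::real)" using h h2 by linarith
  qed
qed

lemma aux_lin: "(Y::real) \<le> Z \<Longrightarrow> Z = 7.5 * X \<Longrightarrow> W = 10 * X \<Longrightarrow> X > 0.8 \<Longrightarrow> Y + 2 < W"
  by linarith

theorem lemma3p1:
  fixes g k d1 d2 d3 l m n :: nat
  assumes "g \<ge> 2"
    and "k \<ge> 1" and "l \<ge> 1" and "m \<ge> 1" and "n \<ge> 1"
    and "1 \<le> d1" and "d1 \<le> g - 1"
    and "1 \<le> d2" and "d2 \<le> g - 1"
    and "1 \<le> d3" and "d3 \<le> g - 1"
    and "l \<le> m" and "m \<le> n" and "n \<ge> 2"
    and "real (fib k) =
           (real d1 * (real g ^ l - 1) / (real g - 1)) *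
           (real d2 * (real g ^ m - 1) / (real g - 1)) *
           (real d3 * (real g ^ n - 1) / (real g - 1))"
  shows "real k < 3 * real n * ln (real g) / ln ((1 + sqrt 5) / 2) + 2
       \<and> 3 * real n * ln (real g) / ln ((1 + sqrt 5) / 2) + 2 < 10 * real n * ln (real g)"
proof -
  define a :: real where "a = (1 + sqrt 5) / 2"
  define L where "L = ln (real g)"
  have la: "ln a > 0.4" unfolding a_def using ln_phi by simp
  have "ln 2 \<le> L" unfolding L_def using assms(1) by simp
  then have L: "L > 0.4" using ln_phi by simp
  have n2: "real n \<ge> 2" using assms(14) by simp
  have "2 * L \<le> real n * L" using n2 L by (intro mult_right_mono) auto
  then have nL: "real n * L > 0.8" using L by linarith
  let ?A = "real d1 * (real g ^ l - 1) / (real g - 1)"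
  let ?B = "real d2 * (real g ^ m - 1) / (real g - 1)"
  let ?C = "real d3 * (real g ^ n - 1) / (real g - 1)"
  have A: "0 \<le> ?A" "?A < real g ^ n" using factor_bound[of g d1 l n] assms by auto
  have B: "0 \<le> ?B" "?B < real g ^ n" using factor_bound[of g d2 m n] assms by auto
  have C: "0 \<le> ?C" "?C < real g ^ n" using factor_bound[of g d3 n n] assms by auto
  define G where "G = real g ^ n"
  have G0: "G > 0" unfolding G_def using assms(1) by simp
  have AB: "?A * ?B \<le> G * G" using A B unfolding G_def by (intro mult_mono) auto
  have "?A * ?B * ?C \<le> (G * G) * ?C" using AB C(1) by (rule mult_right_mono)
  also have "\<dots> < (G * G) * G" using C(2) G0 unfolding G_def[symmetric] by (intro mult_strict_left_mono) auto
  finally have prod: "?A * ?B * ?C < G * G * G" .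
  have G3: "real g ^ (3 * n) = G * G * G" unfolding G_def
    by (metis power_mult mult.commute power3_eq_cube)
  have fk: "real (fib k) < real g ^ (3 * n)" using assms(15) prod G3 by simp
  have pos: "3 * real n * L / ln a > 0" using la L assms by simp
  have part1: "real k < 3 * real n * L / ln a + 2"
  proof (cases "k \<ge> 2")
    case False then show ?thesis using pos by simp
  next
    case True
    then obtain j where j: "k = j + 2" by (metis add.commute le_Suc_ex)
    have "a ^ j < real g ^ (3*n)" using fib_lower[of j] fk j unfolding a_def by simp
    have apos: "a > 0" unfolding a_def by (simp add: add_pos_nonneg)
    have gpos: "real g > 0" using assms(1) by simp
    have "ln (a ^ j) < ln (real g ^ (3*n))"
      using apos gpos \<open>a ^ j < real g ^ (3*n)\<close> by (subst ln_less_cancel_iff) auto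
    then have "real j * ln a < 3 * real n * L"
      using apos gpos unfolding L_def by (simp add: ln_realpow)
    then have "real j < 3 * real n * L / ln a" using la by (simp add: pos_less_divide_eq)
    then show ?thesis using j by simp
  qed
  have "3 * real n * L / ln a \<le> 3 * real n * L / 0.4"
    using la pos L by (intro divide_left_mono) auto
  moreover have "3 * real n * L / 0.4 = 7.5 * (real n * L)" by simp
  moreover have "10 * real n * L = 10 * (real n * L)" by simp
  ultimately have part2: "3 * real n * L / ln a + 2 < 10 * real n * L" using nL aux_lin by blast
  show ?thesis using part1 part2 unfolding a_def L_def by simp
qed

end
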